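(* Let $r, d, m_1, \ldots, m_r$ be positive integers such that $r \geq 4$ and $m_1 + \ldots + m_r = d$. For each $1 \leq i \leq d-1$ define the integer $\lambda(i)$ by $$\overline{i m_1} + \ldots + \overline{i m_r} = \lambda(i)\, d,$$ where for an integer $z$, $\overline{z}\in\{0,\dots,d-1\}$ denotes the remainder of $z$ modulo $d$. Then $$\#\{ i \in \{1,\dots,d-1\} : \lambda(i) = 1 \} < \frac{d-1}{2}.$$ *)

theory Defs
  imports Complex_Main
begin

text \<open>lambda(i): the integer with  sum_k ((i * m_k) mod d) = lambda(i) * d.
  Since sum_k m_k = d, the sum is divisible by d, so this is an exact quotient.\<close>
definition lam :: "nat \<Rightarrow> nat \<Rightarrow> (nat \<Rightarrow> nat) \<Rightarrow> nat \<Rightarrow> nat" where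
  "lam r d m i = (\<Sum>k=1..r. (i * m k) mod d) div d"

end

theory Submission
  imports Defs
begin

definition FF :: "nat \<Rightarrow> nat \<Rightarrow> (nat \<Rightarrow> nat) \<Rightarrow> nat \<Rightarrow> nat" where
  "FF r d m i = (\<Sum>k=1..r. i * m k div d)"

lemma lam_eq:
  assumes "d > 0" and "(\<Sum>k=1..r. m k) = d"
  shows "FF r d m i \<le> i \<and> lam r d m i = i - FF r d m i"
proof -
  have e: "i * m k = d * (i * m k div d) + i * m k mod d" for k
    by simp
  have "i * d = (\<Sum>k=1..r. i * m k)"
    by (metis assms(2) sum_distrib_left mult.commute)
  also have "\<dots> = (\<Sum>k=1..r. d * (i * m k div d) + i * m k mod d)"
    using e by (rule sum.cong[OF refl])
  also have "\<dots> = (\<Sum>k=1..r. d * (i * m k div d)) + (\<Sum>k=1..r. i * m k mod d)"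
    by (rule sum.distrib)
  also have "\<dots> = d * FF r d m i + (\<Sum>k=1..r. i * m k mod d)"
    by (simp only: FF_def sum_distrib_left)
  finally have h: "i * d = d * FF r d m i + (\<Sum>k=1..r. i * m k mod d)" .
  have le: "FF r d m i \<le> i"
  proof -
    have "d * FF r d m i \<le> d * i" using h by (simp add: mult.commute)
    thus ?thesis using assms(1) by simp
  qed
  have "(\<Sum>k=1..r. i * m k mod d) = d * (i - FF r d m i)"
    using h le by (simp add: diff_mult_distrib2 mult.commute)
  hence "lam r d m i = d * (i - FF r d m i) div d" by (simp add: lam_def)
  also have "\<dots> = i - FF r d m i" using assms(1) by simp
  finally show ?thesis using le by simp
qed

lemma key:
  assumes "d > 0" and pos: "\<And>k. k \<in> {1..r} \<Longrightarrow> m k > 0"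
    and sm: "(\<Sum>k=1..r. m k) = d" and "s \<le> d - 1"
  shows "lam r d m s + lam r d m (d - 1 - s) \<ge> r - 1"
proof -
  let ?t = "d - 1 - s"
  have pk: "s * m k div d + ?t * m k div d + 1 \<le> m k" if "k \<in> {1..r}" for k
  proof -
    have "s * m k div d + ?t * m k div d \<le> (s * m k + ?t * m k) div d"
      using div_add1_eq[of "s * m k" "?t * m k" d] by linarith
    also have "s * m k + ?t * m k = (d - 1) * m k"
    proof -
      have "s + ?t = d - 1" using assms(4) by simp
      thus ?thesis by (metis add_mult_distrib)
    qed
    also have "(d - 1) * m k div d < m k"
    proof -
      have "(d - 1) * m k < d * m k" using pos[OF that] assms(1) by simp
      thus ?thesis by (simp add: div_less_iff_less_mult mult.commute assms(1))
    qed
    finally show ?thesis by linarith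
  qed
  have "(\<Sum>k=1..r. s * m k div d + ?t * m k div d + 1) \<le> (\<Sum>k=1..r. m k)"
    by (rule sum_mono) (rule pk)
  moreover have "(\<Sum>k=1..r. s * m k div d + ?t * m k div d + 1) = FF r d m s + FF r d m ?t + (\<Sum>k=1..r. (1::nat))"
    by (simp only: FF_def sum.distrib)
  ultimately have "FF r d m s + FF r d m ?t + r \<le> d"
    using sm by simp
  moreover have "FF r d m s \<le> s \<and> lam r d m s = s - FF r d m s"
    by (rule lam_eq[OF assms(1) sm])
  moreover have "FF r d m ?t \<le> ?t \<and> lam r d m ?t = ?t - FF r d m ?t"
    by (rule lam_eq[OF assms(1) sm])
  ultimately show ?thesis using assms(4) by linarith
qed

theorem lemma4p6:
  fixes r d :: nat and m :: "nat \<Rightarrow> nat"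
  assumes "r \<ge> 4" and "d > 0"
    and "\<And>k. k \<in> {1..r} \<Longrightarrow> m k > 0"
    and "(\<Sum>k=1..r. m k) = d"
  shows "real (card {i \<in> {1..d-1}. lam r d m i = 1}) < (real d - 1) / 2"
proof -
  note pos = assms(3) and sm = assms(4)
  define L where "L = lam r d m"
  define S where "S = {i \<in> {1..d-1}. L i = 1}"
  define S' where "S' = {i \<in> {1..d-1}. L (d - i) = 1}"
  define E where "E = {i \<in> {1..d-1}. i \<notin> S \<and> i \<notin> S'}"
  define Ends where "Ends = {x \<in> S. x + 1 \<notin> S}"
  define Starts where "Starts = {x \<in> S. x = 1 \<or> x - 1 \<notin> S}"
  define Inn where "Inn = {x \<in> S. x + 1 \<in> S}"
  define Inn' where "Inn' = {x \<in> S. x \<noteq> 1 \<and> x - 1 \<in> S}"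
  have keyL: "\<And>s. s \<le> d - 1 \<Longrightarrow> L s + L (d - 1 - s) \<ge> r - 1"
    unfolding L_def using key[OF assms(2) pos sm] by blast
  have dr: "d \<ge> r"
  proof -
    have "(\<Sum>k=1..r. (1::nat)) \<le> (\<Sum>k=1..r. m k)"
      by (rule sum_mono) (use pos in force)
    thus ?thesis using sm by simp
  qed
  have L0: "L 0 = 0" unfolding L_def lam_def by simp
  have Ld1: "L (d - 1) \<ge> 3" using keyL[of 0] L0 assms(1) by simp
  have mlt: "m k < d" if "k \<in> {1..r}" for k
  proof -
    have "(\<Sum>k=1..r. m k) = m k + (\<Sum>j\<in>{1..r} - {k}. m j)"
      using that by (simp add: sum.remove)
    moreover have "(\<Sum>j\<in>{1..r} - {k}. (1::nat)) \<le> (\<Sum>j\<in>{1..r} - {k}. m j)"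
      by (rule sum_mono) (use pos in force)
    moreover have "card ({1..r} - {k}) = r - 1" using that by simp
    ultimately show ?thesis using sm assms(1) by simp
  qed
  have L1: "L 1 = 1"
  proof -
    have "(\<Sum>k=1..r. 1 * m k mod d) = (\<Sum>k=1..r. m k)"
      by (rule sum.cong) (use mlt in auto)
    thus ?thesis unfolding L_def lam_def using sm assms(2) by simp
  qed
  have fin: "finite S" "finite S'" "finite E" unfolding S_def S'_def E_def by auto
  have cS': "card S' = card S"
  proof -
    have "bij_betw (\<lambda>i. d - i) S' S"
      unfolding bij_betw_def S_def S'_def
    proof
      show "inj_on (\<lambda>i. d - i) {i \<in> {1..d - 1}. L (d - i) = 1}"
        by (auto simp: inj_on_def)
      show "(\<lambda>i. d - i) ` {i \<in> {1..d - 1}. L (d - i) = 1} = {i \<in> {1..d - 1}. L i = 1}"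
      proof (rule set_eqI, rule iffI)
        fix x assume "x \<in> {i \<in> {1..d - 1}. L i = 1}"
        thus "x \<in> (\<lambda>i. d - i) ` {i \<in> {1..d - 1}. L (d - i) = 1}"
          by (auto intro!: image_eqI[where x="d - x"])
      qed auto
    qed
    thus ?thesis by (simp add: bij_betw_same_card)
  qed
  have part: "card (S \<union> S') + card E = d - 1"
  proof -
    have eq: "{1..d-1} = (S \<union> S') \<union> E" unfolding E_def S_def S'_def by blast
    have dj: "(S \<union> S') \<inter> E = {}" unfolding E_def by blast
    have "card ((S \<union> S') \<union> E) = card (S \<union> S') + card E"
      using fin dj by (intro card_Un_disjoint) auto
    moreover have "card {1..d-1} = d - 1" by simp
    ultimately show ?thesis using eq by metis
  qed
  have un: "card (S \<union> S') + card (S \<inter> S') = card S + card S'"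
    using card_Un_Int[OF fin(1) fin(2)] by linarith
  have c1: "card S = card Inn + card Ends"
  proof -
    have "S = Inn \<union> Ends" "Inn \<inter> Ends = {}" unfolding Inn_def Ends_def by auto
    moreover have "finite Inn" "finite Ends" using fin unfolding Inn_def Ends_def by auto
    ultimately show ?thesis by (simp add: card_Un_disjoint)
  qed
  have c2: "card S = card Inn' + card Starts"
  proof -
    have "S = Inn' \<union> Starts" "Inn' \<inter> Starts = {}" unfolding Inn'_def Starts_def by auto
    moreover have "finite Inn'" "finite Starts" using fin unfolding Inn'_def Starts_def by auto
    ultimately show ?thesis by (simp add: card_Un_disjoint)
  qed
  have c3: "card Inn = card Inn'"
  proof -
    have "Inn' = (\<lambda>x. x + 1) ` Inn"
    proof (rule set_eqI, rule iffI)
      fix y assume y: "y \<in> Inn'"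
      hence "y \<in> S" "y \<noteq> 1" "y - 1 \<in> S" unfolding Inn'_def by auto
      moreover have "y \<ge> 1" using \<open>y \<in> S\<close> unfolding S_def by simp
      ultimately have "y - 1 \<in> Inn" "y = (y - 1) + 1" unfolding Inn_def by auto
      thus "y \<in> (\<lambda>x. x + 1) ` Inn" by (metis image_eqI)
    next
      fix y assume "y \<in> (\<lambda>x. x + 1) ` Inn"
      then obtain x where "x \<in> S" "x + 1 \<in> S" "y = x + 1" unfolding Inn_def by auto
      moreover have "x \<ge> 1" using \<open>x \<in> S\<close> unfolding S_def by simp
      ultimately show "y \<in> Inn'" unfolding Inn'_def by simp
    qed
    moreover have "inj_on (\<lambda>x. x + 1) Inn" by (simp add: inj_on_def)
    ultimately show ?thesis by (simp add: card_image)
  qed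
  have c4: "card Ends \<le> card E"
  proof -
    have "inj_on (\<lambda>x. x + 1) Ends" by (auto simp: inj_on_def)
    moreover have "(\<lambda>x. x + 1) ` Ends \<subseteq> E"
    proof
      fix y assume "y \<in> (\<lambda>x. x + 1) ` Ends"
      then obtain x where x: "x \<in> S" "x + 1 \<notin> S" "y = x + 1" unfolding Ends_def by auto
      have xr: "1 \<le> x" "x \<le> d - 1" "L x = 1" using x(1) unfolding S_def by auto
      have "x \<noteq> d - 1" using Ld1 xr(3) by auto
      hence yr: "1 \<le> y" "y \<le> d - 1" using xr x(3) by auto
      have "L (d - 1 - x) \<ge> 2" using keyL[OF xr(2)] xr(3) assms(1) by simp
      moreover have "d - y = d - 1 - x" using x(3) by simp
      ultimately have "y \<notin> S'" unfolding S'_def by auto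
      thus "y \<in> E" unfolding E_def using yr x by auto
    qed
    ultimately show ?thesis using fin(3) by (metis card_inj_on_le)
  qed
  have c5: "card (S \<inter> S') + 1 \<le> card Starts"
  proof -
    have "insert 1 (S \<inter> S') \<subseteq> Starts"
    proof
      fix t assume "t \<in> insert 1 (S \<inter> S')"
      thus "t \<in> Starts"
      proof
        assume "t = 1"
        moreover have "1 \<in> S" unfolding S_def using L1 dr assms(1) by auto
        ultimately show ?thesis unfolding Starts_def by auto
      next
        assume t: "t \<in> S \<inter> S'"
        hence tr: "1 \<le> t" "t \<le> d - 1" "L t = 1" "L (d - t) = 1"
          unfolding S_def S'_def by auto
        have "t - 1 \<notin> S" if "t \<noteq> 1"
        proof
          assume "t - 1 \<in> S"
          hence "L (t - 1) = 1" unfolding S_def by auto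
          moreover have "d - 1 - (t - 1) = d - t" using tr that by simp
          moreover have "t - 1 \<le> d - 1" using tr by simp
          ultimately show False using keyL[of "t - 1"] tr assms(1) by simp
        qed
        thus ?thesis using t unfolding Starts_def by auto
      qed
    qed
    moreover have "1 \<notin> S \<inter> S'" unfolding S'_def using Ld1 by auto
    moreover have "finite Starts" using fin unfolding Starts_def by auto
    ultimately show ?thesis
      by (metis Suc_eq_plus1 card_insert_disjoint card_mono finite_Int fin(1))
  qed
  have "2 * card S + 2 \<le> d"
    using part un c1 c2 c3 c4 c5 cS' by linarith
  hence "2 * real (card S) + 2 \<le> real d" by linarith
  thus ?thesis unfolding S_def L_def by simp
qed

end
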